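(* Assume $\bm\lambda\neq0$ and $\bm\mu\neq 0$. (1) For every $k\ge1$, the vector $I^k w$ satisfies $E_{-i,j}\,I^kw=\lambda_i\mu_j\,I^kw$ for all $i\ge0$, $j\ge1$, and $I^kw\notin\mathbb C w$. (2) For every $d\in\mathbb C$, the $\widehat{\mathfrak{gl}}$-submodule $N_d$ of $M_1(\bm\lambda,\bm\mu)$ generated by the vectors $(I-d)I^kw$, $k\ge 0$, is a proper subspace of $M_1(\bm\lambda,\bm\mu)$.
   Context: Let $\widehat{\mathcal A}$ be the Weyl algebra: the unital associative complex algebra generated by $a(r),a^*(r)$ ($r\in\mathbb Z$) with relations $[a(r),a(s)]=[a^*(r),a^*(s)]=0$ and $[a(r),a^*(s)]=\delta_{r+s,0}$. Fix integers $n\ge 0$, $m\ge 1$, $\bm\lambda=(\lambda_0,\dots,\lambda_n)\in\mathbb C^{n+1}$, $\bm\mu=(\mu_1,\dots,\mu_m)\in\mathbb C^m$, and set $\lambda_i=0$ for $i>n$, $\mu_j=0$ for $j>m$. The Whittaker module $M_1(\bm\lambda,\bm\mu)=\widehat{\mathcal A}/\mathcal I$, where $\mathcal I$ is the left ideal generated by $a(i)-\lambda_i$ ($i\ge 0$) and $a^*(j)-\mu_j$ ($j\ge 1$); $w=w_{\bm\lambda,\bm\mu}$ denotes the image of $1$. Normal ordering: $:a(i)a^*(j):$ equals $a^*(j)a(i)$ if $i\ge 0$ and $j\le 0$, and equals $a(i)a^*(j)$ otherwise. For $i,j\in\mathbb Z$, $E_{i,j}:=\,:a(-i)a^*(j):$,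 an operator on $M_1(\bm\lambda,\bm\mu)$ (these give a $\widehat{\mathfrak{gl}}$-module structure of central charge $-1$); $\widehat{\mathfrak{gl}}$-submodules and generation refer to invariance under all $E_{i,j}$. $I:=\sum_{j\in\mathbb Z}E_{j,j}$, a well-defined operator on $M_1(\bm\lambda,\bm\mu)$ commuting with all $E_{i,j}$. *)

theory Defs
  imports Complex_Main "HOL-Library.Poly_Mapping"
begin

text \<open>Concrete (PBW / Fock) model of the Whittaker module M_1(lambda,mu).
  Variables: Inl r stands for the creation operator a(-(r+1)) (r >= 0),
  Inr s stands for the creation operator a*(-s) (s >= 0).
  A vector of M_1 is a finitely supported coefficient function on monomials;
  the monomial m corresponds to the vector (prod of variables^m) w.\<close>

type_synonym var = "nat + nat"
type_synonym mono = "var \<Rightarrow>\<^sub>0 nat"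
type_synonym vec = "mono \<Rightarrow> complex"

definition M1 :: "vec set" where
  "M1 = {f. finite {m. f m \<noteq> 0}}"

definition wvec :: vec where
  "wvec = (\<lambda>m. if m = 0 then 1 else 0)"

definition mulv :: "var \<Rightarrow> vec \<Rightarrow> vec" where
  "mulv v f = (\<lambda>m. if Poly_Mapping.lookup m v > 0 then f (m - Poly_Mapping.single v 1) else 0)"

definition der :: "var \<Rightarrow> vec \<Rightarrow> vec" where
  "der v f = (\<lambda>m. of_nat (Poly_Mapping.lookup m v + 1) * f (m + Poly_Mapping.single v 1))"

definition aop :: "(nat \<Rightarrow> complex) \<Rightarrow> int \<Rightarrow> vec \<Rightarrow> vec" where
  "aop lam r f = (if r < 0 then mulv (Inl (nat (- r) - 1)) f
                  else (\<lambda>m. lam (nat r) * f m + der (Inr (nat r)) f m))"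

definition astar :: "(nat \<Rightarrow> complex) \<Rightarrow> int \<Rightarrow> vec \<Rightarrow> vec" where
  "astar mu s f = (if s \<le> 0 then mulv (Inr (nat (- s))) f
                   else (\<lambda>m. mu (nat s) * f m - der (Inl (nat s - 1)) f m))"

text \<open>E_{i,j} = :a(-i) a*(j):\<close>
definition Eop :: "(nat \<Rightarrow> complex) \<Rightarrow> (nat \<Rightarrow> complex) \<Rightarrow> int \<Rightarrow> int \<Rightarrow> vec \<Rightarrow> vec" where
  "Eop lam mu i j f = (if - i \<ge> 0 \<and> j \<le> 0 then astar mu j (aop lam (- i) f)
                       else aop lam (- i) (astar mu j f))"

text \<open>I = sum over all j of E_{j,j}; on each vector only finitely many terms are nonzero,
  so the sum is taken over that finite set.\<close>
definition Iop :: "(nat \<Rightarrow> complex) \<Rightarrow> (nat \<Rightarrow> complex) \<Rightarrow> vec \<Rightarrow> vec" where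
  "Iop lam mu f = (\<lambda>m. \<Sum>j\<in>{j. Eop lam mu j j f \<noteq> (\<lambda>x. 0)}. Eop lam mu j j f m)"

inductive_set gen_sub :: "(nat \<Rightarrow> complex) \<Rightarrow> (nat \<Rightarrow> complex) \<Rightarrow> vec set \<Rightarrow> vec set"
  for lam mu S where
  base: "v \<in> S \<Longrightarrow> v \<in> gen_sub lam mu S"
| zero: "(\<lambda>m. 0) \<in> gen_sub lam mu S"
| add: "u \<in> gen_sub lam mu S \<Longrightarrow> v \<in> gen_sub lam mu S \<Longrightarrow> (\<lambda>m. u m + v m) \<in> gen_sub lam mu S"
| smult: "v \<in> gen_sub lam mu S \<Longrightarrow> (\<lambda>m. c * v m) \<in> gen_sub lam mu S"
| Eop: "v \<in> gen_sub lam mu S \<Longrightarrow> Eop lam mu i j v \<in> gen_sub lam mu S"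

end

theory Submission
  imports Defs
begin

abbreviation lk :: "mono \<Rightarrow> var \<Rightarrow> nat" where "lk m v \<equiv> Poly_Mapping.lookup m v"
abbreviation e1 :: "var \<Rightarrow> mono" where "e1 v \<equiv> Poly_Mapping.single v (Suc 0)"

lemma lk_e1: "lk (Poly_Mapping.single v k) u = (if u = v then k else 0)"
  by (auto simp: Poly_Mapping.lookup_single when_def)

lemma lk_add: "lk (a + b) u = lk a u + lk b u"
  by (simp add: Poly_Mapping.lookup_add)

lemma lk_minus: "lk (a - b) u = lk a u - lk b u"
  by (simp add: Poly_Mapping.lookup_minus)

lemma mono_eqI: "(\<And>u. lk a u = lk b u) \<Longrightarrow> a = b"
  by (rule Poly_Mapping.poly_mapping_eqI)

lemma minus_plus_e1: "lk m v > 0 \<Longrightarrow> m - e1 v + e1 v = m"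
  by (rule mono_eqI) (auto simp: lk_add lk_minus lk_e1)

lemma minus_plus_e1': "lk m v > 0 \<Longrightarrow> e1 v + (m - e1 v) = m"
  by (rule mono_eqI) (auto simp: lk_add lk_minus lk_e1)

lemma plus_minus_e1: "m + e1 v - e1 v = m"
  by (rule mono_eqI) (auto simp: lk_add lk_minus lk_e1)

lemma swap_e1: "u \<noteq> v \<Longrightarrow> lk m u > 0 \<Longrightarrow> m + e1 v - e1 u = m - e1 u + e1 v"
  by (rule mono_eqI) (auto simp: lk_add lk_minus lk_e1)

lemma minus_minus_e1: "m - e1 v - e1 u = m - e1 u - e1 v"
  by (rule mono_eqI) (auto simp: lk_add lk_minus lk_e1)

lemma e1_nz: "m + e1 v \<noteq> 0"
proof
  assume "m + e1 v = 0"
  then have "lk (m + e1 v) v = 0" by simp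
  then show False by (simp add: lk_add lk_e1)
qed

lemma der_mulv: "der v (mulv u f) m = mulv u (der v f) m + (if u = v then f m else 0)"
proof (cases "u = v")
  case True
  then show ?thesis
    by (cases "lk m v > 0") (auto simp: der_def mulv_def lk_add lk_minus lk_e1 plus_minus_e1 minus_plus_e1 algebra_simps minus_plus_e1')
next
  case False
  then show ?thesis
    by (cases "lk m u > 0") (auto simp: der_def mulv_def lk_add lk_minus lk_e1 swap_e1)
qed

lemma mulv_mulv: "mulv v (mulv u f) m = mulv u (mulv v f) m"
  by (cases "u = v") (auto simp: mulv_def lk_minus lk_e1 minus_minus_e1)

lemma mulv_der_same: "mulv v (der v f) m = of_nat (lk m v) * f m"
  by (auto simp: mulv_def der_def lk_minus lk_e1 minus_plus_e1)

lemma mulv_lin: "mulv v (\<lambda>x. a * f x + b * g x) m = a * mulv v f m + b * mulv v g m"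
  by (simp add: mulv_def)

lemma der_lin: "der v (\<lambda>x. a * f x + b * g x) m = a * der v f m + b * der v g m"
  by (simp add: der_def algebra_simps)

section \<open>linear functionals on monomials\<close>

definition lin :: "(var \<Rightarrow> int) \<Rightarrow> mono \<Rightarrow> int" where
  "lin h m = (\<Sum>v\<in>Poly_Mapping.keys m. h v * int (lk m v))"

lemma lin_add: "lin h (a + b) = lin h a + lin h b"
  unfolding lin_def
  by (rule Poly_Mapping.setsum_keys_plus_distrib) (auto simp: algebra_simps)

lemma lin_e1: "lin h (e1 v) = h v"
  by (simp add: lin_def)

lemma lin_plus_e1: "lin h (m + e1 v) = lin h m + h v"
  by (simp add: lin_add lin_e1)

lemma lin_minus_e1: "lk m v > 0 \<Longrightarrow> lin h (m - e1 v) = lin h m - h v"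
  using lin_plus_e1[of h "m - e1 v" v] minus_plus_e1[of m v] by simp

lemma lin_superset: "finite S \<Longrightarrow> Poly_Mapping.keys m \<subseteq> S \<Longrightarrow> lin h m = (\<Sum>v\<in>S. h v * int (lk m v))"
  unfolding lin_def
  by (rule sum.mono_neutral_left) (auto simp: Poly_Mapping.in_keys_iff)

section \<open>the operator I in closed form\<close>

definition cf :: "(nat \<Rightarrow> complex) \<Rightarrow> (nat \<Rightarrow> complex) \<Rightarrow> var \<Rightarrow> complex" where
  "cf lam mu v = (case v of Inr s \<Rightarrow> lam s | Inl r \<Rightarrow> mu (Suc r))"

definition sg :: "var \<Rightarrow> int" where
  "sg v = (case v of Inr s \<Rightarrow> 1 | Inl r \<Rightarrow> -1)"

definition Ifin :: "(nat \<Rightarrow> complex) \<Rightarrow> (nat \<Rightarrow> complex) \<Rightarrow> var set \<Rightarrow> vec \<Rightarrow> vec" where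
  "Ifin lam mu C f = (\<lambda>m. (\<Sum>u\<in>C. cf lam mu u * mulv u f m) + of_int (lin sg m) * f m)"

lemma Ifin_lin: "Ifin lam mu C (\<lambda>x. a * f x + b * g x) m = a * Ifin lam mu C f m + b * Ifin lam mu C g m"
  by (simp add: Ifin_def mulv_lin algebra_simps sum.distrib sum_distrib_left)

lemma sum_cf_delta:
  assumes "\<forall>u. u \<notin> C \<longrightarrow> cf lam mu u = 0" "finite C"
  shows "(\<Sum>u\<in>C. cf lam mu u * (if u = v then x else 0)) = cf lam mu v * x"
proof -
  have "(\<Sum>u\<in>C. cf lam mu u * (if u = v then x else 0)) = (\<Sum>u\<in>C. (if u = v then cf lam mu v * x else 0))"
    by (rule sum.cong) auto
  also have "\<dots> = cf lam mu v * x" using assms by (simp add: sum.delta')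
  finally show ?thesis .
qed

lemma der_Ifin:
  assumes C: "\<forall>u. u \<notin> C \<longrightarrow> cf lam mu u = 0" "finite C"
  shows "der v (Ifin lam mu C f) m = Ifin lam mu C (der v f) m + cf lam mu v * f m + of_int (sg v) * der v f m"
proof -
  have "der v (Ifin lam mu C f) m = (\<Sum>u\<in>C. cf lam mu u * der v (mulv u f) m)
        + of_int (lin sg m + sg v) * der v f m"
    by (simp add: der_def Ifin_def lin_plus_e1 sum_distrib_left algebra_simps)
  also have "(\<Sum>u\<in>C. cf lam mu u * der v (mulv u f) m)
      = (\<Sum>u\<in>C. cf lam mu u * mulv u (der v f) m) + (\<Sum>u\<in>C. cf lam mu u * (if u = v then f m else 0))"
    by (simp add: der_mulv algebra_simps sum.distrib)
  also have "(\<Sum>u\<in>C. cf lam mu u * (if u = v then f m else 0)) = cf lam mu v * f m"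
    using sum_cf_delta[OF C] .
  finally show ?thesis by (simp add: Ifin_def algebra_simps)
qed

lemma mulv_sum: "mulv v (\<lambda>x. \<Sum>u\<in>C. c u * h u x) m = (\<Sum>u\<in>C. c u * mulv v (h u) m)"
  by (simp add: mulv_def)

lemma mulv_add: "mulv v (\<lambda>x. f x + g x) m = mulv v f m + mulv v g m"
  by (simp add: mulv_def)

lemma mulv_wt: "mulv v (\<lambda>x. of_int (lin sg x) * f x) m = of_int (lin sg m - sg v) * mulv v f m"
  by (simp add: mulv_def lin_minus_e1)

lemma mulv_Ifin:
  shows "mulv v (Ifin lam mu C f) m = Ifin lam mu C (mulv v f) m - of_int (sg v) * mulv v f m"
  unfolding Ifin_def mulv_add mulv_sum mulv_wt
  by (simp add: mulv_mulv[of v _ f m] algebra_simps)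

lemma Ifin_lin1: "Ifin lam mu C (\<lambda>x. a * f x + g x) m = a * Ifin lam mu C f m + Ifin lam mu C g m"
  using Ifin_lin[of lam mu C a f 1 g m] by simp

lemma Ifin_lin2: "Ifin lam mu C (\<lambda>x. a * f x - g x) m = a * Ifin lam mu C f m - Ifin lam mu C g m"
  using Ifin_lin[of lam mu C a f "-1" g m] by simp

lemma aop_Ifin:
  assumes C: "\<forall>u. u \<notin> C \<longrightarrow> cf lam mu u = 0" "finite C"
  shows "aop lam r (Ifin lam mu C f) = (\<lambda>x. Ifin lam mu C (aop lam r f) x + aop lam r f x)"
proof (rule ext)
  fix x :: mono
  show "aop lam r (Ifin lam mu C f) x = Ifin lam mu C (aop lam r f) x + aop lam r f x"
  proof (cases "r < 0")
    case True
    then show ?thesis by (simp add: aop_def mulv_Ifin sg_def)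
  next
    case False
    then show ?thesis
      by (simp add: aop_def der_Ifin[OF C] Ifin_lin1, simp add: sg_def cf_def algebra_simps)
  qed
qed

lemma astar_Ifin:
  assumes C: "\<forall>u. u \<notin> C \<longrightarrow> cf lam mu u = 0" "finite C"
  shows "astar mu s (Ifin lam mu C f) = (\<lambda>x. Ifin lam mu C (astar mu s f) x - astar mu s f x)"
proof (rule ext)
  fix x :: mono
  show "astar mu s (Ifin lam mu C f) x = Ifin lam mu C (astar mu s f) x - astar mu s f x"
  proof (cases "s \<le> 0")
    case True
    then show ?thesis by (simp add: astar_def mulv_Ifin sg_def)
  next
    case False
    then have "Suc (nat s - 1) = nat s" by simp
    with False show ?thesis
      by (simp add: astar_def der_Ifin[OF C] Ifin_lin2, simp add: sg_def cf_def algebra_simps)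
  qed
qed

lemma aop_lin: "aop lam r (\<lambda>x. f x + g x) = (\<lambda>x. aop lam r f x + aop lam r g x)"
  "aop lam r (\<lambda>x. f x - g x) = (\<lambda>x. aop lam r f x - aop lam r g x)"
  "aop lam r (\<lambda>x. c * f x) = (\<lambda>x. c * aop lam r f x)"
  by (auto simp: aop_def mulv_def der_def algebra_simps)

lemma astar_lin: "astar mu r (\<lambda>x. f x + g x) = (\<lambda>x. astar mu r f x + astar mu r g x)"
  "astar mu r (\<lambda>x. f x - g x) = (\<lambda>x. astar mu r f x - astar mu r g x)"
  "astar mu r (\<lambda>x. c * f x) = (\<lambda>x. c * astar mu r f x)"
  by (auto simp: astar_def mulv_def der_def algebra_simps)

lemma Eop_lin: "Eop lam mu i j (\<lambda>x. f x + g x) = (\<lambda>x. Eop lam mu i j f x + Eop lam mu i j g x)"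
  "Eop lam mu i j (\<lambda>x. f x - g x) = (\<lambda>x. Eop lam mu i j f x - Eop lam mu i j g x)"
  "Eop lam mu i j (\<lambda>x. c * f x) = (\<lambda>x. c * Eop lam mu i j f x)"
  by (auto simp: Eop_def aop_lin astar_lin)

lemma Eop_Ifin:
  assumes C: "\<forall>u. u \<notin> C \<longrightarrow> cf lam mu u = 0" "finite C"
  shows "Eop lam mu i j (Ifin lam mu C f) = Ifin lam mu C (Eop lam mu i j f)"
  by (auto simp: Eop_def aop_Ifin[OF C] astar_Ifin[OF C] aop_lin astar_lin)

section \<open>finite support\<close>

lemma M1_iff: "f \<in> M1 \<longleftrightarrow> finite {m. f m \<noteq> 0}"
  by (simp add: M1_def)

lemma M1_zero: "(\<lambda>x. 0) \<in> M1"
  by (simp add: M1_def)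

lemma M1_mono: "g \<in> M1 \<Longrightarrow> (\<And>x. g x = 0 \<Longrightarrow> f x = 0) \<Longrightarrow> f \<in> M1"
  unfolding M1_def by (auto elim: finite_subset[rotated])

lemma M1_add: "f \<in> M1 \<Longrightarrow> g \<in> M1 \<Longrightarrow> (\<lambda>x. f x + g x) \<in> M1"
  unfolding M1_def mem_Collect_eq
  by (rule finite_subset[of _ "{m. f m \<noteq> 0} \<union> {m. g m \<noteq> 0}"]) auto

lemma M1_diff: "f \<in> M1 \<Longrightarrow> g \<in> M1 \<Longrightarrow> (\<lambda>x. f x - g x) \<in> M1"
  unfolding M1_def mem_Collect_eq
  by (rule finite_subset[of _ "{m. f m \<noteq> 0} \<union> {m. g m \<noteq> 0}"]) auto

lemma M1_mult: "f \<in> M1 \<Longrightarrow> (\<lambda>x. a x * f x) \<in> M1"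
  by (erule M1_mono) simp

lemma M1_smult: "f \<in> M1 \<Longrightarrow> (\<lambda>x. c * f x) \<in> M1"
  by (erule M1_mono) simp

lemma M1_mulv: assumes "f \<in> M1" shows "mulv v f \<in> M1"
proof -
  have "{m. mulv v f m \<noteq> 0} \<subseteq> (\<lambda>m. m + e1 v) ` {m. f m \<noteq> 0}"
  proof
    fix m assume "m \<in> {m. mulv v f m \<noteq> 0}"
    then have "lk m v > 0" "f (m - e1 v) \<noteq> 0" by (auto simp: mulv_def split: if_splits)
    then show "m \<in> (\<lambda>m. m + e1 v) ` {m. f m \<noteq> 0}"
      by (intro image_eqI[of _ _ "m - e1 v"]) (auto simp: minus_plus_e1)
  qed
  then show ?thesis using assms unfolding M1_def by (auto elim: finite_subset)
qed

lemma M1_der: assumes "f \<in> M1" shows "der v f \<in> M1"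
proof -
  have "{m. der v f m \<noteq> 0} \<subseteq> (\<lambda>m. m - e1 v) ` {m. f m \<noteq> 0}"
  proof
    fix m assume "m \<in> {m. der v f m \<noteq> 0}"
    then have "f (m + e1 v) \<noteq> 0" by (auto simp: der_def)
    then show "m \<in> (\<lambda>m. m - e1 v) ` {m. f m \<noteq> 0}"
      by (intro image_eqI[of _ _ "m + e1 v"]) (auto simp: plus_minus_e1)
  qed
  then show ?thesis using assms unfolding M1_def by (auto elim: finite_subset)
qed

lemma M1_sum: "finite C \<Longrightarrow> (\<And>u. u \<in> C \<Longrightarrow> h u \<in> M1) \<Longrightarrow> (\<lambda>x. \<Sum>u\<in>C. h u x) \<in> M1"
proof (induction C rule: finite_induct)
  case empty
  then show ?case by (simp add: M1_zero)
next
  case (insert a F)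
  then show ?case by (simp add: M1_add)
qed

lemma M1_Ifin: "finite C \<Longrightarrow> f \<in> M1 \<Longrightarrow> Ifin lam mu C f \<in> M1"
  unfolding Ifin_def
  by (intro M1_add M1_sum M1_mult M1_smult M1_mulv)

lemma M1_aop: "f \<in> M1 \<Longrightarrow> aop lam r f \<in> M1"
  unfolding aop_def by (auto intro: M1_add M1_smult M1_mulv M1_der)

lemma M1_astar: "f \<in> M1 \<Longrightarrow> astar mu r f \<in> M1"
  unfolding astar_def by (auto intro: M1_diff M1_smult M1_mulv M1_der)

lemma M1_Eop: "f \<in> M1 \<Longrightarrow> Eop lam mu i j f \<in> M1"
  unfolding Eop_def by (auto intro: M1_aop M1_astar)

lemma M1_wvec: "wvec \<in> M1"
  unfolding M1_def wvec_def by simp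

definition vj :: "int \<Rightarrow> var" where
  "vj j = (if j \<le> 0 then Inr (nat (- j)) else Inl (nat j - 1))"

definition jv :: "var \<Rightarrow> int" where
  "jv v = (case v of Inr s \<Rightarrow> - int s | Inl r \<Rightarrow> int r + 1)"

lemma vj_jv: "vj (jv v) = v"
  by (cases v) (auto simp: vj_def jv_def)

lemma jv_vj: "jv (vj j) = j"
  by (auto simp: vj_def jv_def)

lemma inj_jv: "inj_on jv W"
  by (metis inj_onI vj_jv)

lemma mulv_simps: "mulv v (\<lambda>x. f x + g x) m = mulv v f m + mulv v g m"
  "mulv v (\<lambda>x. f x - g x) m = mulv v f m - mulv v g m"
  "mulv v (\<lambda>x. c * f x) m = c * mulv v f m"
  by (auto simp: mulv_def)

lemma Eop_diag: "Eop lam mu j j f m = cf lam mu (vj j) * mulv (vj j) f m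
     + of_int (sg (vj j)) * of_nat (lk m (vj j)) * f m"
proof (cases "j \<le> 0")
  case True
  then show ?thesis
    by (simp add: Eop_def astar_def aop_def mulv_simps mulv_der_same vj_def cf_def sg_def)
next
  case False
  then have "Suc (nat j - 1) = nat j" by simp
  with False show ?thesis
    by (simp add: Eop_def astar_def aop_def mulv_simps mulv_der_same vj_def cf_def sg_def)
qed

lemma Iop_eq:
  assumes C: "\<forall>u. u \<notin> C \<longrightarrow> cf lam mu u = 0" "finite C" and f: "f \<in> M1"
  shows "Iop lam mu f = Ifin lam mu C f"
proof (rule ext)
  fix x :: mono
  define S where "S = {m. f m \<noteq> 0}"
  have finS: "finite S" using f by (simp add: S_def M1_def)
  define V where "V = C \<union> \<Union>(Poly_Mapping.keys ` S)"
  have finV: "finite V" using finS C(2) by (simp add: V_def)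
  define J where "J = {j. Eop lam mu j j f \<noteq> (\<lambda>x. 0)}"
  define W where "W = V \<union> Poly_Mapping.keys x"
  have finW: "finite W" using finV by (simp add: W_def)
  have JW: "J \<subseteq> jv ` W"
  proof
    fix j assume j: "j \<in> J"
    have "vj j \<in> V"
    proof (rule ccontr)
      assume nv: "vj j \<notin> V"
      have "Eop lam mu j j f m = 0" for m
      proof -
        have "cf lam mu (vj j) = 0" using nv C(1) by (auto simp: V_def)
        moreover have "of_nat (lk m (vj j)) * f m = 0"
        proof (cases "f m = 0")
          case False
          then have "m \<in> S" by (simp add: S_def)
          then have "vj j \<notin> Poly_Mapping.keys m" using nv by (auto simp: V_def)
          then show ?thesis by (simp add: Poly_Mapping.in_keys_iff)
        qed simp
        ultimately show ?thesis by (simp add: Eop_diag)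
      qed
      then have "Eop lam mu j j f = (\<lambda>x. 0)" by auto
      then show False using j by (simp add: J_def)
    qed
    then show "j \<in> jv ` W" by (metis UnI1 W_def image_eqI jv_vj)
  qed
  have "Iop lam mu f x = (\<Sum>j\<in>J. Eop lam mu j j f x)"
    by (simp add: Iop_def J_def)
  also have "\<dots> = (\<Sum>j\<in>jv ` W. Eop lam mu j j f x)"
    by (rule sum.mono_neutral_left) (use finW JW in \<open>auto simp: J_def\<close>)
  also have "\<dots> = (\<Sum>v\<in>W. Eop lam mu (jv v) (jv v) f x)"
    by (simp add: sum.reindex inj_jv)
  also have "\<dots> = (\<Sum>v\<in>W. cf lam mu v * mulv v f x) + (\<Sum>v\<in>W. of_int (sg v * int (lk x v))) * f x"
    by (simp add: Eop_diag vj_jv sum.distrib sum_distrib_right)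
  also have "(\<Sum>v\<in>W. cf lam mu v * mulv v f x) = (\<Sum>v\<in>C. cf lam mu v * mulv v f x)"
    by (rule sum.mono_neutral_right) (use finW C in \<open>auto simp: W_def V_def\<close>)
  also have "(\<Sum>v\<in>W. of_int (sg v * int (lk x v))) = (of_int (lin sg x) :: complex)"
    using lin_superset[of W x sg] finW by (simp add: W_def)
  finally show "Iop lam mu f x = Ifin lam mu C f x" by (simp add: Ifin_def)
qed

lemma mulv_alt: "mulv v f m = (if lk m v > 0 then f (m - e1 v) else 0)"
  by (simp add: mulv_def)

lemma nonvanish:
  assumes C: "\<forall>u. u \<notin> C \<longrightarrow> cf lam mu u = 0" "finite C"
    and v0: "v0 \<in> C" "cf lam mu v0 \<noteq> 0"
    and q: "q \<in> M1" "q \<noteq> (\<lambda>x. 0)"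
  shows "\<exists>M. M \<noteq> 0 \<and> Ifin lam mu C q M - d * q M \<noteq> 0"
proof -
  define S where "S = {m. q m \<noteq> 0}"
  have finS: "finite S" using q by (simp add: S_def M1_def)
  have neS: "S \<noteq> {}" using q by (auto simp: S_def)
  define h where "h = (\<lambda>u. if u \<in> C then (1::int) else 0)"
  define \<phi> where "\<phi> = (\<lambda>m. lin h m + int (lk m v0))"
  define mx where "mx = Max (\<phi> ` S)"
  have "mx \<in> \<phi> ` S" unfolding mx_def using finS neS by (intro Max_in) auto
  then obtain m0 where m0: "m0 \<in> S" "\<phi> m0 = mx" by auto
  have maxi: "q m = 0" if "\<phi> m > \<phi> m0" for m
  proof (rule ccontr)
    assume "q m \<noteq> 0"
    then have "m \<in> S" by (simp add: S_def)
    then have "\<phi> m \<le> mx" unfolding mx_def using finS by (intro Max_ge) auto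
    with that m0 show False by simp
  qed
  define M where "M = m0 + e1 v0"
  have phiM: "\<phi> M = \<phi> m0 + 2"
    by (simp add: \<phi>_def M_def lin_plus_e1 h_def v0 lk_add lk_e1)
  have qM: "q M = 0" by (rule maxi) (simp add: phiM)
  have others: "mulv u q M = 0" if u: "u \<in> C - {v0}" for u
  proof (cases "lk M u > 0")
    case True
    have "\<phi> (M - e1 u) = \<phi> M - 1"
      using True u by (auto simp: \<phi>_def lin_minus_e1 h_def lk_minus lk_e1)
    then have "q (M - e1 u) = 0" by (intro maxi) (simp add: phiM)
    then show ?thesis by (simp add: mulv_alt)
  qed (simp add: mulv_alt)
  have mv0: "mulv v0 q M = q m0"
    by (simp add: mulv_alt M_def lk_add lk_e1 plus_minus_e1)
  have "(\<Sum>u\<in>C. cf lam mu u * mulv u q M) = cf lam mu v0 * mulv v0 q M + (\<Sum>u\<in>C - {v0}. cf lam mu u * mulv u q M)"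
    using C(2) v0(1) by (rule sum.remove)
  also have "(\<Sum>u\<in>C - {v0}. cf lam mu u * mulv u q M) = 0"
    by (rule sum.neutral) (simp add: others)
  finally have "Ifin lam mu C q M - d * q M = cf lam mu v0 * q m0"
    by (simp add: Ifin_def qM mv0)
  moreover have "q m0 \<noteq> 0" using m0 by (simp add: S_def)
  moreover have "M \<noteq> 0" unfolding M_def by (rule e1_nz)
  ultimately show ?thesis using v0 by auto
qed

lemma der_wvec: "der v wvec m = 0"
  by (simp add: der_def wvec_def e1_nz[of m v, simplified])

lemma Ifin_zero: "Ifin lam mu C (\<lambda>x. 0) = (\<lambda>x. 0)"
  by (simp add: Ifin_def mulv_def)

lemma Ifin_smult: "Ifin lam mu C (\<lambda>x. c * f x) = (\<lambda>x. c * Ifin lam mu C f x)"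
  by (simp add: Ifin_def mulv_simps algebra_simps sum_distrib_left)

lemma Ifin_add: "Ifin lam mu C (\<lambda>x. f x + g x) = (\<lambda>x. Ifin lam mu C f x + Ifin lam mu C g x)"
  by (simp add: Ifin_def mulv_simps algebra_simps sum.distrib)

lemma Eop_Ifin_pow:
  assumes C: "\<forall>u. u \<notin> C \<longrightarrow> cf lam mu u = 0" "finite C"
  shows "Eop lam mu i j ((Ifin lam mu C ^^ k) f) = (Ifin lam mu C ^^ k) (Eop lam mu i j f)"
  by (induction k) (simp_all add: Eop_Ifin[OF C])

lemma Ifin_pow_smult: "(Ifin lam mu C ^^ k) (\<lambda>x. c * f x) = (\<lambda>x. c * (Ifin lam mu C ^^ k) f x)"
  by (induction k) (simp_all add: Ifin_smult)

lemma Eop_wvec: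
  assumes "j \<ge> 1"
  shows "Eop lam mu (- int i) (int j) wvec = (\<lambda>x. lam i * mu j * wvec x)"
proof -
  have a: "astar mu (int j) wvec = (\<lambda>x. mu j * wvec x)"
    using assms by (auto simp: astar_def der_wvec)
  have b: "aop lam (int i) wvec = (\<lambda>x. lam i * wvec x)"
    by (auto simp: aop_def der_wvec)
  show ?thesis using assms
    by (simp add: Eop_def a aop_lin(3) b, simp add: algebra_simps)
qed

theorem lemma6p2:
  fixes n m :: nat and lam mu :: "nat \<Rightarrow> complex"
  assumes "m \<ge> 1"
    and "\<forall>i>n. lam i = 0"
    and "\<forall>j>m. mu j = 0"
    and "\<exists>i\<le>n. lam i \<noteq> 0"
    and "\<exists>j\<in>{1..m}. mu j \<noteq> 0"
  shows "(\<forall>k\<ge>1. (\<forall>i j. j \<ge> 1 \<longrightarrow>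
              Eop lam mu (- int i) (int j) ((Iop lam mu ^^ k) wvec)
                = (\<lambda>x. lam i * mu j * (Iop lam mu ^^ k) wvec x))
           \<and> (\<forall>c. (Iop lam mu ^^ k) wvec \<noteq> (\<lambda>x. c * wvec x)))
       \<and> (\<forall>d::complex. gen_sub lam mu
              {(\<lambda>x. (Iop lam mu ^^ (k+1)) wvec x - d * (Iop lam mu ^^ k) wvec x) | k. True}
            \<subset> M1)"
proof -
  define C0 where "C0 = Inr ` {..n} \<union> Inl ` {..<m}"
  have finC: "finite C0" by (simp add: C0_def)
  have hC: "\<forall>u. u \<notin> C0 \<longrightarrow> cf lam mu u = 0"
  proof (intro allI impI)
    fix u assume "u \<notin> C0"
    then show "cf lam mu u = 0"
    proof (cases u)
      case (Inl a)
      then have "a \<ge> m" using \<open>u \<notin> C0\<close> by (auto simp: C0_def)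
      then show ?thesis using assms(3) Inl by (simp add: cf_def)
    next
      case (Inr b)
      then have "b > n" using \<open>u \<notin> C0\<close> by (auto simp: C0_def)
      then show ?thesis using assms(2) Inr by (simp add: cf_def)
    qed
  qed
  note C = hC finC
  obtain i0 where i0: "i0 \<le> n" "lam i0 \<noteq> 0" using assms(4) by auto
  have v0: "Inr i0 \<in> C0" "cf lam mu (Inr i0) \<noteq> 0" using i0 by (auto simp: C0_def cf_def)
  define I where "I = Ifin lam mu C0"
  have pow: "(Iop lam mu ^^ k) wvec = (I ^^ k) wvec \<and> (I ^^ k) wvec \<in> M1" for k
  proof (induction k)
    case 0
    then show ?case by (simp add: M1_wvec)
  next
    case (Suc k)
    then show ?case
      using Iop_eq[OF C, of "(I ^^ k) wvec"] M1_Ifin[OF finC, of "(I ^^ k) wvec" lam mu]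
      by (simp add: I_def)
  qed
  have nz: "(I ^^ k) wvec \<noteq> (\<lambda>x. 0)" for k
  proof (induction k)
    case 0
    have "wvec 0 \<noteq> 0" by (simp add: wvec_def)
    then show ?case by auto
  next
    case (Suc k)
    obtain M where "M \<noteq> 0" "Ifin lam mu C0 ((I ^^ k) wvec) M - 0 * (I ^^ k) wvec M \<noteq> 0"
      using nonvanish[OF C v0 conjunct2[OF pow] Suc] by blast
    then show ?case by (auto simp: I_def)
  qed
  have part1: "\<forall>k\<ge>1. (\<forall>i j. j \<ge> 1 \<longrightarrow>
              Eop lam mu (- int i) (int j) ((Iop lam mu ^^ k) wvec)
                = (\<lambda>x. lam i * mu j * (Iop lam mu ^^ k) wvec x))
           \<and> (\<forall>c. (Iop lam mu ^^ k) wvec \<noteq> (\<lambda>x. c * wvec x))"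
  proof (intro allI impI conjI)
    fix k i j :: nat assume "1 \<le> k" "1 \<le> j"
    show "Eop lam mu (- int i) (int j) ((Iop lam mu ^^ k) wvec)
                = (\<lambda>x. lam i * mu j * (Iop lam mu ^^ k) wvec x)"
      using pow[of k] Eop_Ifin_pow[OF C] Eop_wvec[OF \<open>1 \<le> j\<close>] Ifin_pow_smult
      by (simp add: I_def)
  next
    fix k :: nat and c assume "1 \<le> k"
    then obtain k' where k': "k = Suc k'" by (cases k) auto
    obtain M where M: "M \<noteq> 0" "Ifin lam mu C0 ((I ^^ k') wvec) M - 0 * (I ^^ k') wvec M \<noteq> 0"
      using nonvanish[OF C v0 conjunct2[OF pow] nz] by blast
    have "(Iop lam mu ^^ k) wvec M \<noteq> c * wvec M"
      using M pow[of k] k' by (simp add: I_def wvec_def)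
    then show "(Iop lam mu ^^ k) wvec \<noteq> (\<lambda>x. c * wvec x)" by metis
  qed
  have part2: "gen_sub lam mu
              {(\<lambda>x. (Iop lam mu ^^ (k+1)) wvec x - d * (Iop lam mu ^^ k) wvec x) | k. True}
            \<subset> M1" for d :: complex
  proof -
    define P where "P = {(\<lambda>x. I q x - d * q x) | q. q \<in> M1}"
    have PM: "P \<subseteq> M1"
      unfolding P_def I_def using M1_Ifin[OF finC] by (auto intro!: M1_diff M1_smult)
    have sub: "v \<in> P" if "v \<in> gen_sub lam mu
              {(\<lambda>x. (Iop lam mu ^^ (k+1)) wvec x - d * (Iop lam mu ^^ k) wvec x) | k. True}" for v
      using that
    proof (induction rule: gen_sub.induct)
      case (base v)
      then obtain k where "v = (\<lambda>x. (Iop lam mu ^^ (k+1)) wvec x - d * (Iop lam mu ^^ k) wvec x)"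
        by auto
      then have "v = (\<lambda>x. I ((I ^^ k) wvec) x - d * (I ^^ k) wvec x)"
        using pow[of k] pow[of "k+1"] by simp
      then show ?case unfolding P_def using pow[of k] by blast
    next
      case zero
      have "(\<lambda>m. 0::complex) = (\<lambda>x. I (\<lambda>x. 0) x - d * (\<lambda>x. 0) x)" by (simp add: I_def Ifin_zero)
      then show ?case unfolding P_def using M1_zero by blast
    next
      case (add u v)
      then obtain q1 q2 where q: "q1 \<in> M1" "u = (\<lambda>x. I q1 x - d * q1 x)"
        "q2 \<in> M1" "v = (\<lambda>x. I q2 x - d * q2 x)" unfolding P_def by auto
      then have "(\<lambda>m. u m + v m) = (\<lambda>x. I (\<lambda>x. q1 x + q2 x) x - d * (q1 x + q2 x))"
        by (simp add: I_def Ifin_add algebra_simps)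
      then show ?case unfolding P_def using q M1_add by blast
    next
      case (smult v c)
      then obtain q where q: "q \<in> M1" "v = (\<lambda>x. I q x - d * q x)" unfolding P_def by auto
      then have "(\<lambda>m. c * v m) = (\<lambda>x. I (\<lambda>x. c * q x) x - d * (c * q x))"
        by (simp add: I_def Ifin_smult algebra_simps)
      then show ?case unfolding P_def using q M1_smult by blast
    next
      case (Eop v i j)
      then obtain q where q: "q \<in> M1" "v = (\<lambda>x. I q x - d * q x)" unfolding P_def by auto
      then have "Eop lam mu i j v = (\<lambda>x. I (Eop lam mu i j q) x - d * Eop lam mu i j q x)"
        by (simp add: I_def Eop_lin Eop_Ifin[OF C])
      then show ?case unfolding P_def using q M1_Eop by blast
    qed
    have wP: "wvec \<notin> P"
    proof
      assume "wvec \<in> P"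
      then obtain q where q: "q \<in> M1" "wvec = (\<lambda>x. I q x - d * q x)" unfolding P_def by auto
      show False
      proof (cases "q = (\<lambda>x. 0)")
        case True
        have "wvec = (\<lambda>x. 0)" using q(2) True by (simp add: I_def Ifin_zero)
        then have "wvec 0 = 0" by (metis)
        then show False by (simp add: wvec_def)
      next
        case False
        obtain M where "M \<noteq> 0" "Ifin lam mu C0 q M - d * q M \<noteq> 0"
          using nonvanish[OF C v0 q(1) False] by blast
        then show False using q(2) by (metis I_def wvec_def)
      qed
    qed
    show ?thesis using sub PM wP M1_wvec by blast
  qed
  show ?thesis using part1 part2 by blast
qed

end
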